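(* Let $U=\{u_1,\dots,u_{2^m}\}\subseteq\mathbb{F}_2^n\setminus\{0\}$ be a set of $2^m$ distinct nonzero vectors, and let $B:\mathbb{F}_2^n\to\mathbb{F}_2^m$ be a uniformly random linear map. Fix $y\in\mathbb{F}_2^m$ and define $Z_y:=|\{i: Bu_i=y\}|$. Then for every integer $r\ge 0$, with $a=\lceil\log(r+2)\rceil$, \[ \Pr[Z_y>r]\le\left(\prod_{j=0}^{a-1}(r+2-2^j)\right)^{-1}. \]
   Context: $\log$ denotes the base-$2$ logarithm. A uniformly random linear map $\mathbb{F}_2^n\to\mathbb{F}_2^m$ is one chosen uniformly among all linear maps. *)

theory Defs
  imports "HOL-Analysis.Analysis" "HOL-Probability.Probability" "HOL-Library.Z2"
begin

text \<open>Vectors of F_2^n are rendered as bit ^ 'n; a linear map F_2^n -> F_2^m is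
  given by its matrix bit ^ 'n ^ 'm acting via *v.\<close>

end

theory Submission
  imports Defs
begin

lemma UNIV_bit: "(UNIV :: bit set) = {0, 1}"
  by (auto intro: bit.exhaust)

lemma CARD_bit [simp]: "CARD(bit) = 2"
  by (simp add: UNIV_bit)

lemma card_bitvec: "CARD(bit ^ 'n) = 2 ^ CARD('n)"
  by simp

lemma finite_bitvec [simp]: "finite (UNIV :: (bit ^ 'n) set)"
  using card_bitvec[where 'n='n] by (intro card_ge_0_finite) simp

lemma finite_bitmat [simp]: "finite (UNIV :: (bit ^ 'n ^ 'm) set)"
proof -
  have "CARD(bit ^ 'n ^ 'm) = (2 ^ CARD('n)) ^ CARD('m)" by simp
  then show ?thesis by (intro card_ge_0_finite) simp
qed

lemma card_span_bit:
  fixes A :: "(bit ^ 'n) set"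
  assumes "finite A"
  shows "card (vec.span A) \<le> 2 ^ card A"
proof -
  have "vec.span A \<subseteq> (\<lambda>T. \<Sum>T) ` Pow A"
  proof
    fix x assume "x \<in> vec.span A"
    then obtain u where x: "x = (\<Sum>v\<in>A. u v *s v)"
      using vec.span_finite[OF assms] by auto
    have "(\<Sum>v\<in>A. u v *s v) = (\<Sum>v\<in>A. if u v = 1 then v else 0)"
      by (rule sum.cong) (auto intro: bit.exhaust[of "u _"])
    also have "\<dots> = \<Sum>{v\<in>A. u v = 1}"
      using assms by (simp add: sum.If_cases Int_def)
    finally show "x \<in> (\<lambda>T. \<Sum>T) ` Pow A" using x by auto
  qed
  then have "card (vec.span A) \<le> card ((\<lambda>T. \<Sum>T) ` Pow A)"
    by (intro card_mono) (auto simp: assms)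
  also have "\<dots> \<le> card (Pow A)" by (rule card_image_le) (simp add: assms)
  also have "\<dots> = 2 ^ card A" by (simp add: card_Pow assms)
  finally show ?thesis .
qed

definition indl :: "(bit ^ 'n) set \<Rightarrow> nat \<Rightarrow> (bit ^ 'n) list set" where
  "indl S j = {ts. length ts = j \<and> set ts \<subseteq> S \<and> distinct ts \<and> vec.independent (set ts)}"

lemma finite_indl: "finite (indl S j)"
proof -
  have "indl S j \<subseteq> {xs. set xs \<subseteq> UNIV \<and> length xs = j}" by (auto simp: indl_def)
  then show ?thesis by (rule finite_subset) (intro finite_lists_length_eq, simp)
qed

lemma indl_Suc:
  "indl S (Suc j) = (\<lambda>(ts, v). v # ts) ` Sigma (indl S j) (\<lambda>ts. S - vec.span (set ts))"
proof (intro equalityI subsetI)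
  fix xs assume "xs \<in> indl S (Suc j)"
  then obtain v ts where xs: "xs = v # ts" and "length ts = j" "v \<in> S" "set ts \<subseteq> S"
     "distinct ts" "v \<notin> set ts" "vec.independent (insert v (set ts))"
    by (cases xs) (auto simp: indl_def)
  then have "vec.independent (set ts)" "v \<notin> vec.span (set ts)"
    by (auto simp: vec.independent_insert)
  then show "xs \<in> (\<lambda>(ts, v). v # ts) ` Sigma (indl S j) (\<lambda>ts. S - vec.span (set ts))"
    using xs \<open>length ts = j\<close> \<open>v \<in> S\<close> \<open>set ts \<subseteq> S\<close> \<open>distinct ts\<close>
    by (auto simp: indl_def image_iff intro!: exI[of _ ts])
next
  fix xs assume "xs \<in> (\<lambda>(ts, v). v # ts) ` Sigma (indl S j) (\<lambda>ts. S - vec.span (set ts))"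
  then obtain ts v where xs: "xs = v # ts" and ts: "ts \<in> indl S j" and v: "v \<in> S" "v \<notin> vec.span (set ts)"
    by auto
  then have "v \<notin> set ts" using vec.span_base by blast
  then show "xs \<in> indl S (Suc j)" using xs ts v
    by (auto simp: indl_def vec.independent_insertI)
qed

lemma card_indl_Suc:
  "card (indl S (Suc j)) = (\<Sum>ts\<in>indl S j. card (S - vec.span (set ts)))"
proof -
  have "inj_on (\<lambda>(ts, v). v # ts) (Sigma (indl S j) (\<lambda>ts. S - vec.span (set ts)))"
    by (auto simp: inj_on_def)
  then have "card (indl S (Suc j)) = card (Sigma (indl S j) (\<lambda>ts. S - vec.span (set ts)))"
    by (simp add: indl_Suc card_image)
  also have "\<dots> = (\<Sum>ts\<in>indl S j. card (S - vec.span (set ts)))"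
    by (rule card_SigmaI) (auto simp: finite_indl intro: finite_subset[OF _ finite_bitvec])
  finally show ?thesis .
qed

lemma card_diff_span:
  assumes "0 \<notin> S" "ts \<in> indl S j"
  shows "card S + 1 \<le> card (S - vec.span (set ts)) + 2 ^ j"
proof -
  have fS: "finite S" by (rule finite_subset[OF _ finite_bitvec]) simp
  have fsp: "finite (vec.span (set ts))" by (rule finite_subset[OF _ finite_bitvec]) simp
  have cts: "card (set ts) = j" using assms(2) by (auto simp: indl_def distinct_card)
  have "card S = card (S - vec.span (set ts)) + card (S \<inter> vec.span (set ts))"
    using fS by (metis card_Int_Diff add.commute)
  moreover have "card (S \<inter> vec.span (set ts)) \<le> card (vec.span (set ts) - {0})"
    using assms(1) fsp by (intro card_mono) auto
  moreover have "card (vec.span (set ts) - {0}) = card (vec.span (set ts)) - 1"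
    by (intro card_Diff_singleton vec.span_zero)
  moreover have "card (vec.span (set ts)) \<le> 2 ^ j"
  proof -
    have "card (vec.span (set ts)) \<le> 2 ^ card (set ts)" by (rule card_span_bit) simp
    then show ?thesis unfolding cts .
  qed
  moreover have "card (vec.span (set ts)) > 0"
    using fsp vec.span_zero[of "set ts"] card_gt_0_iff by blast
  ultimately show ?thesis by linarith
qed

lemma indl_lower:
  fixes k :: real
  assumes "0 \<notin> S" "k \<le> real (card S) + 1" "\<forall>i<j. 2 ^ i \<le> k"
  shows "(\<Prod>i<j. k - 2 ^ i) \<le> real (card (indl S j))"
  using assms(3)
proof (induction j)
  case 0
  have "indl S 0 = {[]}" unfolding indl_def using vec.independent_empty by auto
  then show ?case by simp
next
  case (Suc j)
  have IH: "(\<Prod>i<j. k - 2 ^ i) \<le> real (card (indl S j))" using Suc by auto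
  have nn: "0 \<le> k - 2 ^ j" using Suc.prems by auto
  have "(\<Prod>i<Suc j. k - 2 ^ i) = (\<Prod>i<j. k - 2 ^ i) * (k - 2 ^ j)" by simp
  also have "\<dots> \<le> real (card (indl S j)) * (k - 2 ^ j)"
    by (rule mult_right_mono[OF IH nn])
  also have "\<dots> = (\<Sum>ts\<in>indl S j. k - 2 ^ j)" by simp
  also have "\<dots> \<le> (\<Sum>ts\<in>indl S j. real (card (S - vec.span (set ts))))"
  proof (rule sum_mono)
    fix ts assume "ts \<in> indl S j"
    from card_diff_span[OF assms(1) this] have
      "real (card S + 1) \<le> real (card (S - vec.span (set ts)) + 2 ^ j)"
      by (simp only: of_nat_le_iff)
    then have "real (card S) + 1 \<le> real (card (S - vec.span (set ts))) + 2 ^ j"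
      by simp
    then show "k - 2 ^ j \<le> real (card (S - vec.span (set ts)))" using assms(2) by linarith
  qed
  also have "\<dots> = real (card (indl S (Suc j)))" by (simp add: card_indl_Suc)
  finally show ?case .
qed

lemma map_eq_replicate_iff: "map f xs = replicate (length xs) y \<longleftrightarrow> (\<forall>t\<in>set xs. f t = y)"
  by (induction xs) auto

lemma fiber_count:
  fixes ts :: "(bit ^ 'n) list" and y :: "bit ^ 'm"
  assumes dist: "distinct ts" and ind: "vec.independent (set ts)"
  shows "card {B :: bit ^ 'n ^ 'm. \<forall>t\<in>set ts. B *v t = y} * (2 ^ CARD('m)) ^ length ts
         = CARD(bit ^ 'n ^ 'm)"
proof -
  define F where "F zs = {B :: bit ^ 'n ^ 'm. map (\<lambda>t. B *v t) ts = zs}" for zs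
  define Z where "Z = {zs :: (bit ^ 'm) list. set zs \<subseteq> UNIV \<and> length zs = length ts}"
  define ys where "ys = replicate (length ts) y"
  have surj: "\<exists>B. B \<in> F zs" if "zs \<in> Z" for zs
  proof -
    obtain g where g: "Vector_Spaces.linear (*s) (*s) g"
      "\<forall>x\<in>set ts. g x = the (map_of (zip ts zs) x)"
      using vec.linear_independent_extend[OF ind, where f="\<lambda>x. the (map_of (zip ts zs) x)"] by blast
    have "map (\<lambda>t. matrix g *v t) ts = zs"
    proof (rule nth_equalityI)
      show "length (map (\<lambda>t. matrix g *v t) ts) = length zs" using that by (simp add: Z_def)
      fix i assume "i < length (map (\<lambda>t. matrix g *v t) ts)"
      then have i: "i < length ts" by simp
      have "map (\<lambda>t. matrix g *v t) ts ! i = g (ts ! i)"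
        using i by (simp add: matrix_works[OF g(1)])
      also have "\<dots> = the (map_of (zip ts zs) (ts ! i))" using g(2) i by simp
      also have "\<dots> = zs ! i" using map_of_zip_nth[of ts zs i] that i dist by (simp add: Z_def)
      finally show "map (\<lambda>t. matrix g *v t) ts ! i = zs ! i" .
    qed
    then show ?thesis by (auto simp: F_def)
  qed
  have ysZ: "ys \<in> Z" by (simp add: Z_def ys_def)
  have eqcard: "card (F zs) = card (F ys)" if zsZ: "zs \<in> Z" for zs
  proof -
    obtain Bz where Bz: "Bz \<in> F zs" using surj[OF zsZ] by blast
    obtain By where By: "By \<in> F ys" using surj[OF ysZ] by blast
    define D where "D = Bz - By"
    have "F zs = (\<lambda>B. B + D) ` F ys"
    proof (intro equalityI subsetI)
      fix C assume C: "C \<in> F zs"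
      have "C - D \<in> F ys"
        using C Bz By by (auto simp: F_def D_def matrix_vector_mult_diff_rdistrib
          list_eq_iff_nth_eq)
      then show "C \<in> (\<lambda>B. B + D) ` F ys" by (intro image_eqI[of _ _ "C - D"]) auto
    next
      fix C assume "C \<in> (\<lambda>B. B + D) ` F ys"
      then obtain B where B: "B \<in> F ys" "C = B + D" by auto
      then show "C \<in> F zs"
        using Bz By by (auto simp: F_def D_def matrix_vector_mult_add_rdistrib
          matrix_vector_mult_diff_rdistrib list_eq_iff_nth_eq)
    qed
    moreover have "inj_on (\<lambda>B. B + D) (F ys)" by (auto simp: inj_on_def)
    ultimately show ?thesis by (simp add: card_image)
  qed
  have fin: "finite (F zs)" for zs by (rule finite_subset[OF _ finite_bitmat]) simp
  have finZ: "finite Z" unfolding Z_def by (rule finite_lists_length_eq) simp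
  have cardZ: "card Z = (2 ^ CARD('m)) ^ length ts"
    unfolding Z_def by (subst card_lists_length_eq) simp_all
  have U: "(UNIV :: (bit ^ 'n ^ 'm) set) = (\<Union>zs\<in>Z. F zs)"
    by (auto simp: F_def Z_def)
  have "card (\<Union>zs\<in>Z. F zs) = (\<Sum>zs\<in>Z. card (F zs))"
    by (rule card_UN_disjoint[OF finZ]) (use fin in \<open>auto simp: F_def\<close>)
  then have "CARD(bit ^ 'n ^ 'm) = (\<Sum>zs\<in>Z. card (F zs))"
    by (metis U)
  also have "\<dots> = (\<Sum>zs\<in>Z. card (F ys))" by (rule sum.cong) (auto simp: eqcard)
  also have "\<dots> = card (F ys) * (2 ^ CARD('m)) ^ length ts" by (simp add: cardZ)
  also have "F ys = {B. \<forall>t\<in>set ts. B *v t = y}"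
    by (simp add: F_def ys_def map_eq_replicate_iff)
  finally show ?thesis by simp
qed

lemma card_filter_sum: "finite A \<Longrightarrow> real (card {x\<in>A. P x}) = (\<Sum>x\<in>A. if P x then 1 else 0)"
  by (simp add: sum.If_cases Int_def)

theorem theorem2p2:
  fixes U :: "(bit ^ 'n) set" and y :: "bit ^ 'm" and r :: nat
  assumes "card U = 2 ^ CARD('m)"
    and "0 \<notin> U"
  shows "measure_pmf.prob (pmf_of_set (UNIV :: (bit ^ 'n ^ 'm) set))
           {B. card {u \<in> U. B *v u = y} > r}
         \<le> 1 / (\<Prod>j<nat \<lceil>log 2 (real r + 2)\<rceil>. (real r + 2 - 2 ^ j))"
proof -
  define k where "k = real r + 2"
  define a where "a = nat \<lceil>log 2 k\<rceil>"
  define P where "P = (\<Prod>j<a. k - 2 ^ j)"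
  have pow_lt: "2 ^ j < k" if "j < a" for j
  proof -
    have "int j < \<lceil>log 2 k\<rceil>" using that by (simp add: a_def)
    then have "real j < log 2 k" by (simp add: less_ceiling_iff)
    then have "2 powr real j < k" using less_log_iff[of 2 k] by (simp add: k_def)
    then show ?thesis by (simp add: powr_realpow)
  qed
  have Ppos: "P > 0" unfolding P_def by (rule prod_pos) (use pow_lt in auto)
  have finU: "finite U" using assms(1) by (intro card_ge_0_finite) simp
  define L where "L = indl U a"
  have finL: "finite L" by (simp add: L_def finite_indl)
  have cardL: "card L \<le> (2 ^ CARD('m)) ^ a"
  proof -
    have "L \<subseteq> {xs. set xs \<subseteq> U \<and> length xs = a}" by (auto simp: L_def indl_def)
    then have "card L \<le> card {xs. set xs \<subseteq> U \<and> length xs = a}"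
      by (intro card_mono) (simp_all add: finite_lists_length_eq finU)
    then show ?thesis by (simp add: card_lists_length_eq finU assms(1))
  qed
  define N where "N = CARD(bit ^ 'n ^ 'm)"
  have Npos: "N > 0" unfolding N_def by (simp add: card_gt_0_iff)
  define R where "R B ts \<longleftrightarrow> (\<forall>t\<in>set ts. B *v t = y)" for B :: "bit ^ 'n ^ 'm" and ts
  define c where "c B = card {ts\<in>L. R B ts}" for B
  define bad where "bad = {B :: bit ^ 'n ^ 'm. card {u \<in> U. B *v u = y} > r}"
  have lowc: "P \<le> real (c B)" if "B \<in> bad" for B
  proof -
    define S where "S = {u \<in> U. B *v u = y}"
    have "{ts\<in>L. R B ts} = indl S a" by (auto simp: L_def indl_def R_def S_def)
    moreover have "P \<le> real (card (indl S a))" unfolding P_def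
    proof (rule indl_lower)
      show "0 \<notin> S" using assms(2) by (simp add: S_def)
      show "k \<le> real (card S) + 1" using that by (simp add: bad_def S_def k_def)
      show "\<forall>i<a. 2 ^ i \<le> k" using pow_lt by (simp add: less_imp_le)
    qed
    ultimately show ?thesis by (simp add: c_def)
  qed
  have fiber: "real (card {B :: bit ^ 'n ^ 'm. R B ts}) = N / (2 ^ CARD('m)) ^ a" if "ts \<in> L" for ts
  proof -
    have "distinct ts" "vec.independent (set ts)" "length ts = a"
      using that by (auto simp: L_def indl_def)
    from fiber_count[OF this(1,2), where y=y and 'm='m]
    have "card {B :: bit ^ 'n ^ 'm. R B ts} * (2 ^ CARD('m)) ^ a = N"
      unfolding N_def R_def \<open>length ts = a\<close> .
    then have "real (card {B :: bit ^ 'n ^ 'm. R B ts} * (2 ^ CARD('m)) ^ a) = real N"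
      by (simp only:)
    then have "real (card {B :: bit ^ 'n ^ 'm. R B ts}) * (2 ^ CARD('m)) ^ a = N"
      by simp
    then show ?thesis by (simp add: field_simps)
  qed
  have "(\<Sum>B\<in>UNIV. real (c B)) = (\<Sum>B\<in>UNIV. \<Sum>ts\<in>L. if R B ts then 1 else 0)"
    by (simp add: c_def card_filter_sum finL)
  also have "\<dots> = (\<Sum>ts\<in>L. \<Sum>B\<in>UNIV. if R B ts then 1 else 0)" by (rule sum.swap)
  also have "\<dots> = (\<Sum>ts\<in>L. real (card {B :: bit ^ 'n ^ 'm. R B ts}))"
    by (rule sum.cong[OF refl]) (use card_filter_sum[OF finite_bitmat, where P="\<lambda>B. R B _"] in simp)
  also have "\<dots> = (\<Sum>ts\<in>L. N / (2 ^ CARD('m)) ^ a)" by (rule sum.cong) (simp_all add: fiber)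
  also have "\<dots> = real (card L) * (N / (2 ^ CARD('m)) ^ a)" by simp
  also have "\<dots> \<le> (2 ^ CARD('m)) ^ a * (N / (2 ^ CARD('m)) ^ a)"
  proof (rule mult_right_mono)
    show "real (card L) \<le> (2 ^ CARD('m)) ^ a" using of_nat_mono[OF cardL, where 'a=real]
      by simp
  qed simp
  also have "\<dots> = N" by simp
  finally have sumc: "(\<Sum>B\<in>UNIV. real (c B)) \<le> N" .
  have "P * card bad = (\<Sum>B\<in>bad. P)" by simp
  also have "\<dots> \<le> (\<Sum>B\<in>bad. real (c B))" by (rule sum_mono) (rule lowc)
  also have "\<dots> \<le> (\<Sum>B\<in>UNIV. real (c B))" by (rule sum_mono2) auto
  also have "\<dots> \<le> N" by (rule sumc)
  finally have main: "P * card bad \<le> N" .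
  have "measure_pmf.prob (pmf_of_set (UNIV :: (bit ^ 'n ^ 'm) set)) bad = card bad / N"
    by (subst measure_pmf_of_set) (auto simp: N_def)
  also have "\<dots> \<le> 1 / P" using main Ppos Npos by (simp add: field_simps)
  finally show ?thesis by (simp add: bad_def P_def a_def k_def)
qed

end
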